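(* Let $0<s<1$. Define $$J_s(r,\widetilde r)=\frac{r}{\widetilde r}\min\Big\{1,\frac{(3-s)\widetilde r-2}{(1-s)r-2}\Big\}$$ on $$K(s)=\Big[2,\frac{6}{(3-4s)_+}\Big]\times\Big[\max\Big\{1,\frac{6}{7-4s}\Big\},\frac{2}{2-s}\Big].$$ Then $$\sup_{(r,\widetilde r)\in K(s)}J_s(r,\widetilde r)=\begin{cases}\frac{3-s}{1-s}, & \frac12\leq s<1,\\[2pt] \frac{7-4s}{3-4s}, & \frac14\leq s\leq\frac12,\\[2pt] \frac{6}{3-4s}, & 0<s\leq\frac14.\end{cases}$$ Moreover, the supremum is attained in each case: (i) if $0<s\leq\frac14$, at $(r,\widetilde r)=(\frac{6}{3-4s},1)$; (ii) if $\frac14\leq s\leq\frac12$, at $(r,\widetilde r)=(\frac6{3-4s},\frac6{7-4s})$; (iii) if $\frac12\le s<1$, at the points with $\widetilde r=\frac{1-s}{3-s}r$ and $$\frac{6}{7-4s}\cdot\frac{3-s}{1-s}\leq r\leq\begin{cases}\frac{6}{3-4s}, & \frac12\leq s\leq 3-\sqrt6,\\ \frac{2}{2-s}\cdot\frac{3-s}{1-s}, & 3-\sqrt6\leq s<1.\end{cases}$$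
   Context: Here $x_+=\max(x,0)$, with the convention $\frac60=\infty$. *)

theory Defs
  imports Complex_Main
begin

text \<open>J_s(r, rt) = (r/rt) * min{1, ((3-s) rt - 2)/((1-s) r - 2)}.
  A zero denominator (with the numerator positive on K(s)) is read as the
  value +infinity, so the minimum is 1 in that case.\<close>
definition J :: "real \<Rightarrow> real \<Rightarrow> real \<Rightarrow> real" where
  "J s r rt = (r / rt) *
     (if (1 - s) * r - 2 = 0 then 1
      else min 1 (((3 - s) * rt - 2) / ((1 - s) * r - 2)))"

text \<open>K(s) = [2, 6/(3-4s)_+] x [max{1, 6/(7-4s)}, 2/(2-s)], with 6/0 = infinity,
  i.e. the upper bound on r is absent when 3 - 4s <= 0.\<close>
definition K :: "real \<Rightarrow> (real \<times> real) set" where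
  "K s = {(r, rt). 2 \<le> r \<and> (3 - 4 * s > 0 \<longrightarrow> r \<le> 6 / (3 - 4 * s)) \<and>
                   max 1 (6 / (7 - 4 * s)) \<le> rt \<and> rt \<le> 2 / (2 - s)}"

end

theory Submission
  imports Defs
begin

lemma sup_max:
  assumes "q \<in> A" "f q = v" "\<And>p. p \<in> A \<Longrightarrow> f p \<le> (v::real)"
  shows "(SUP p\<in>A. f p) = v"
  using assms by (intro cSup_eq_maximum) auto

lemma J_le_ratio:
  assumes "r > 0" "rt > 0"
  shows "J s r rt \<le> r / rt"
proof -
  have "r / rt > 0" using assms by simp
  moreover have "(if (1 - s) * r - 2 = 0 then 1
      else min 1 (((3 - s) * rt - 2) / ((1 - s) * r - 2))) \<le> (1::real)" by auto
  ultimately show ?thesis unfolding J_def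
    by (metis mult_left_mono mult.right_neutral less_imp_le)
qed

lemma J_gen:
  assumes s: "0 < s" "s < 1" and p: "(r, rt) \<in> K s"
  shows "J s r rt \<le> (3 - s) / (1 - s)"
proof -
  from p have r: "2 \<le> r" and rt: "1 \<le> rt" "rt \<le> 2 / (2 - s)" unfolding K_def by auto
  have rtp: "rt > 0" using rt by simp
  define d where "d = (1 - s) * r - 2"
  define n where "n = (3 - s) * rt - 2"
  have "3 - s \<le> (3 - s) * rt" using mult_left_mono[of 1 rt "3-s"] rt s by simp
  hence n0: "n > 0" unfolding n_def using s by linarith
  have rrt: "r \<le> r * rt" using mult_left_mono[of 1 rt r] rt r by simp
  show ?thesis
  proof (cases "d = 0")
    case True
    hence "J s r rt = r / rt" unfolding J_def d_def by simp
    also have "\<dots> \<le> r" using rt r by (simp add: divide_le_eq rrt)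
    also have "r = 2 / (1 - s)" using True s unfolding d_def by (simp add: field_simps)
    also have "\<dots> \<le> (3 - s) / (1 - s)" using s by (simp add: divide_right_mono)
    finally show ?thesis .
  next
    case False
    note dne = False
    show ?thesis
    proof (cases "d < 0")
      case True
      have "n / d < 0" using True n0 by (simp add: divide_pos_neg)
      hence "J s r rt = (r / rt) * (n / d)" unfolding J_def using dne
        by (simp add: d_def n_def)
      also have "\<dots> < 0" using \<open>n/d<0\<close> r rtp by (intro mult_pos_neg) auto
      also have "0 \<le> (3 - s) / (1 - s)" using s by simp
      finally show ?thesis by simp
    next
      case False
      hence dp: "d > 0" using dne by simp
      show ?thesis
      proof (cases "(1 - s) * r \<le> (3 - s) * rt")
        case True
        have "J s r rt \<le> r / rt" using J_le_ratio r rtp by simp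
        also have "\<dots> \<le> (3 - s) / (1 - s)" using True s rtp
          by (simp add: divide_le_eq le_divide_eq mult.commute)
        finally show ?thesis .
      next
        case False
        have "J s r rt = (r / rt) * min 1 (n / d)" unfolding J_def using dne
          by (simp add: d_def n_def)
        also have "\<dots> \<le> (r / rt) * (n / d)"
          using r rtp by (intro mult_left_mono) auto
        also have "(r / rt) * (n / d) = (r * n) / (rt * d)" by simp
        also have "\<dots> \<le> (3 - s) / (1 - s)"
        proof -
          have "r * n * (1 - s) \<le> (3 - s) * (rt * d)"
            using False unfolding n_def d_def by (simp add: algebra_simps)
          thus ?thesis using s rtp dp by (simp add: divide_le_eq le_divide_eq mult.commute mult.left_commute)
        qed
        finally show ?thesis .
      qed
    qed
  qed
qed

lemma J_small:
  assumes s: "0 < s" "s < 3/4" and p: "(r, rt) \<in> K s" and m: "0 < m" "m \<le> rt"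
  shows "J s r rt \<le> (6 / (3 - 4*s)) / m"
proof -
  from p s have r: "2 \<le> r" "r \<le> 6 / (3 - 4*s)" and rt: "1 \<le> rt" unfolding K_def by auto
  have "J s r rt \<le> r / rt" using J_le_ratio r rt by simp
  also have "\<dots> \<le> (6 / (3 - 4*s)) / m" using r m rt s by (intro frac_le) auto
  finally show ?thesis .
qed

lemma J_eq:
  assumes "(1 - s) * r - 2 \<le> (3 - s) * rt - 2" "0 \<le> (1 - s) * r - 2"
  shows "J s r rt = r / rt"
proof (cases "(1 - s) * r - 2 = 0")
  case True thus ?thesis unfolding J_def by simp
next
  case False
  hence "1 \<le> ((3 - s) * rt - 2) / ((1 - s) * r - 2)" using assms by simp
  thus ?thesis unfolding J_def using False by simp
qed

lemma part_i:
  assumes s: "0 < s" "s \<le> 1/4"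
  shows "(6 / (3 - 4*s), 1) \<in> K s \<and> J s (6 / (3 - 4*s)) 1 = 6 / (3 - 4*s)"
proof -
  have p: "3 - 4*s > 0" using s by simp
  have a1: "2 \<le> 6 / (3 - 4*s)" using p s by (simp add: le_divide_eq)
  have a2: "6 / (7 - 4*s) \<le> 1" using s by (simp add: divide_le_eq)
  have a3: "1 \<le> 2 / (2 - s)" using s by (simp add: le_divide_eq)
  have "(6 / (3 - 4*s), 1) \<in> K s" unfolding K_def using a1 a2 a3 by simp
  moreover have "(1 - s) * (6 / (3 - 4*s)) - 2 = 2 * s / (3 - 4*s)" using p by (simp add: field_simps)
  moreover have "0 \<le> (1/4 - s) * (8 - 4*s)" using s by simp
  hence "2 * s \<le> (1 - s) * (3 - 4*s)" by (simp add: algebra_simps)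
  hence "2 * s / (3 - 4*s) \<le> (3 - s) * 1 - 2" using p by (simp add: divide_le_eq)
  ultimately show ?thesis using J_eq[of s "6 / (3 - 4*s)" 1] s p by simp
qed

lemma part_ii:
  assumes s: "1/4 \<le> s" "s \<le> 1/2"
  shows "(6 / (3 - 4*s), 6 / (7 - 4*s)) \<in> K s
          \<and> J s (6 / (3 - 4*s)) (6 / (7 - 4*s)) = (7 - 4*s) / (3 - 4*s)"
proof -
  have p: "3 - 4*s > 0" "7 - 4*s > 0" using s by auto
  have a1: "2 \<le> 6 / (3 - 4*s)" using p s by (simp add: le_divide_eq)
  have a2: "1 \<le> 6 / (7 - 4*s)" using s by (simp add: le_divide_eq)
  have a3: "6 / (7 - 4*s) \<le> 2 / (2 - s)" using s by (simp add: divide_le_eq le_divide_eq)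
  have "(6 / (3 - 4*s), 6 / (7 - 4*s)) \<in> K s" unfolding K_def using a1 a2 a3 by simp
  moreover have "(1 - s) * (6 / (3 - 4*s)) - 2 = 2 * s / (3 - 4*s)" using p by (simp add: field_simps)
  moreover have "(3 - s) * (6 / (7 - 4*s)) - 2 = (4 + 2*s) / (7 - 4*s)" using p by (simp add: field_simps)
  moreover have "2 * s / (3 - 4*s) \<le> (4 + 2*s) / (7 - 4*s)" using p s
    by (simp add: divide_le_eq le_divide_eq algebra_simps)
  moreover have "(6 / (3 - 4*s)) / (6 / (7 - 4*s)) = (7 - 4*s) / (3 - 4*s)" using p by (simp add: field_simps)
  ultimately show ?thesis using J_eq[of s "6 / (3 - 4*s)" "6 / (7 - 4*s)"] s p by simp
qed

lemma part_iii:
  assumes s: "1/2 \<le> s" "s < 1"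
    and h: "rt = (1 - s) / (3 - s) * r" "6 / (7 - 4*s) * ((3 - s) / (1 - s)) \<le> r"
      "r \<le> (if s \<le> 3 - sqrt 6 then 6 / (3 - 4*s) else 2 / (2 - s) * ((3 - s) / (1 - s)))"
  shows "(r, rt) \<in> K s \<and> J s r rt = (3 - s) / (1 - s)"
proof -
  have p: "0 < 1 - s" "0 < 3 - s" "0 < 7 - 4*s" "0 < 2 - s" using s by auto
  have rt3: "(3 - s) * rt = (1 - s) * r" using h(1) p by simp
  have L1: "1 \<le> 6 / (7 - 4*s)" using s by (simp add: le_divide_eq)
  have "(1 - s) * (6 / (7 - 4*s) * ((3 - s) / (1 - s))) \<le> (1 - s) * r"
    using h(2) p by (intro mult_left_mono) auto
  hence lr: "6 / (7 - 4*s) * (3 - s) \<le> (1 - s) * r" using p by simp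
  have "2 \<le> 6 / (7 - 4*s) * (3 - s)" using p s by (simp add: le_divide_eq)
  hence d0: "2 \<le> (1 - s) * r" using lr by linarith
  have "0 < (1 - s) * r" using d0 by linarith
  hence rpos: "0 < r" using p by (simp add: zero_less_mult_iff)
  have "(1 - s) * r \<le> r" using rpos s by (simp add: algebra_simps)
  hence r2: "2 \<le> r" using d0 by linarith
  have "(3 - s) * (6 / (7 - 4*s)) \<le> (3 - s) * rt" using lr rt3 by (simp add: mult.commute)
  hence rtL: "6 / (7 - 4*s) \<le> rt" using p(2) by (rule mult_left_le_imp_le)
  have rtBR: "rt \<le> 2 / (2 - s) \<and> (3 - 4*s > 0 \<longrightarrow> r \<le> 6 / (3 - 4*s))"
  proof (cases "s \<le> 3 - sqrt 6")
    case True
    have "sqrt 6 * sqrt 6 \<le> (3 - s) * (3 - s)" using True s by (intro mult_mono) auto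
    hence q: "0 \<le> s*s - 6*s + 3" by (simp add: algebra_simps)
    have "s * s \<le> s * 1" using s by (intro mult_left_mono) auto
    hence p4: "0 < 3 - 4*s" using q by linarith
    have rle: "r \<le> 6 / (3 - 4*s)" using h(3) True by simp
    have A: "3 - 4*s > 0 \<longrightarrow> r \<le> 6 / (3 - 4*s)" using rle by simp
    have "(1 - s) * r \<le> (1 - s) * (6 / (3 - 4*s))" using rle p by (intro mult_left_mono) auto
    also have "\<dots> \<le> (3 - s) * (2 / (2 - s))"
    proof -
      have "(1 - s) * 6 * (2 - s) \<le> (3 - s) * 2 * (3 - 4*s)" using q by (simp add: algebra_simps)
      thus ?thesis using p p4 by (simp add: divide_le_eq le_divide_eq mult.commute mult.left_commute)
    qed
    finally have "(3 - s) * rt \<le> (3 - s) * (2 / (2 - s))" using rt3 by simp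
    hence "rt \<le> 2 / (2 - s)" using p(2) by (rule mult_left_le_imp_le)
    thus ?thesis using A by simp
  next
    case False
    have "(3 - s) * (3 - s) < sqrt 6 * sqrt 6" using False p by (intro mult_strict_mono) auto
    hence q: "s*s - 6*s + 3 < 0" by (simp add: algebra_simps)
    have rle: "r \<le> 2 / (2 - s) * ((3 - s) / (1 - s))" using h(3) False by simp
    have "(1 - s) * r \<le> (1 - s) * (2 / (2 - s) * ((3 - s) / (1 - s)))" using rle p by (intro mult_left_mono) auto
    also have "\<dots> = (3 - s) * (2 / (2 - s))" using p by simp
    finally have "(3 - s) * rt \<le> (3 - s) * (2 / (2 - s))" using rt3 by simp
    hence B: "rt \<le> 2 / (2 - s)" using p(2) by (rule mult_left_le_imp_le)
    have "3 - 4*s > 0 \<longrightarrow> r \<le> 6 / (3 - 4*s)"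
    proof
      assume p4: "3 - 4*s > 0"
      have "2 * (3 - s) * (3 - 4*s) \<le> 6 * ((2 - s) * (1 - s))" using q by (simp add: algebra_simps)
      hence "2 / (2 - s) * ((3 - s) / (1 - s)) \<le> 6 / (3 - 4*s)" using p p4
        by (simp add: divide_le_eq le_divide_eq mult.commute mult.left_commute)
      thus "r \<le> 6 / (3 - 4*s)" using rle by linarith
    qed
    thus ?thesis using B by simp
  qed
  hence rtB: "rt \<le> 2 / (2 - s)" and rR: "3 - 4*s > 0 \<longrightarrow> r \<le> 6 / (3 - 4*s)" by auto
  have "(r, rt) \<in> K s" unfolding K_def using r2 rR rtL rtB L1 by simp
  moreover have "J s r rt = r / rt" using J_eq[of s r rt] rt3 d0 by simp
  moreover have "r / rt = (3 - s) / (1 - s)" using h(1) rpos p by simp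
  ultimately show ?thesis by simp
qed

theorem lemma3p3:
  fixes s :: real
  assumes "0 < s" and "s < 1"
  shows "bdd_above ((\<lambda>(r, rt). J s r rt) ` K s)
    \<and> (1/2 \<le> s \<longrightarrow> (SUP p\<in>K s. J s (fst p) (snd p)) = (3 - s) / (1 - s))
    \<and> (1/4 \<le> s \<and> s \<le> 1/2 \<longrightarrow> (SUP p\<in>K s. J s (fst p) (snd p)) = (7 - 4*s) / (3 - 4*s))
    \<and> (s \<le> 1/4 \<longrightarrow> (SUP p\<in>K s. J s (fst p) (snd p)) = 6 / (3 - 4*s))
    \<and> (s \<le> 1/4 \<longrightarrow> (6 / (3 - 4*s), 1) \<in> K s \<and> J s (6 / (3 - 4*s)) 1 = 6 / (3 - 4*s))
    \<and> (1/4 \<le> s \<and> s \<le> 1/2 \<longrightarrow> (6 / (3 - 4*s), 6 / (7 - 4*s)) \<in> K s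
          \<and> J s (6 / (3 - 4*s)) (6 / (7 - 4*s)) = (7 - 4*s) / (3 - 4*s))
    \<and> (1/2 \<le> s \<longrightarrow> (\<forall>r rt. rt = (1 - s) / (3 - s) * r
          \<and> 6 / (7 - 4*s) * ((3 - s) / (1 - s)) \<le> r
          \<and> r \<le> (if s \<le> 3 - sqrt 6 then 6 / (3 - 4*s) else 2 / (2 - s) * ((3 - s) / (1 - s)))
          \<longrightarrow> (r, rt) \<in> K s \<and> J s r rt = (3 - s) / (1 - s)))"
proof -
  let ?f = "\<lambda>p. J s (fst p) (snd p)"
  have gen: "\<And>p. p \<in> K s \<Longrightarrow> ?f p \<le> (3 - s) / (1 - s)"
    using J_gen assms by (metis prod.collapse)
  have bdd: "bdd_above ((\<lambda>(r, rt). J s r rt) ` K s)"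
    by (rule bdd_aboveI[where M = "(3 - s) / (1 - s)"]) (use J_gen assms in auto)
  have c1: "1/2 \<le> s \<longrightarrow> (SUP p\<in>K s. ?f p) = (3 - s) / (1 - s)"
  proof
    assume s2: "1/2 \<le> s"
    define r0 where "r0 = 6 / (7 - 4*s) * ((3 - s) / (1 - s))"
    have p: "0 < 1 - s" "0 < 3 - s" "0 < 7 - 4*s" "0 < 2 - s" using assms by auto
    have "r0 \<le> (if s \<le> 3 - sqrt 6 then 6 / (3 - 4*s) else 2 / (2 - s) * ((3 - s) / (1 - s)))"
    proof (cases "s \<le> 3 - sqrt 6")
      case True
      have "sqrt 6 * sqrt 6 \<le> (3 - s) * (3 - s)" using True assms by (intro mult_mono) auto
      hence q: "0 \<le> s*s - 6*s + 3" by (simp add: algebra_simps)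
      have "s * s \<le> s * 1" using assms by (intro mult_left_mono) auto
      hence p4: "0 < 3 - 4*s" using q by linarith
      have "6 * (3 - s) * (3 - 4*s) \<le> 6 * ((7 - 4*s) * (1 - s))" using s2 by (simp add: algebra_simps)
      hence "r0 \<le> 6 / (3 - 4*s)" unfolding r0_def using p p4
        by (simp add: divide_le_eq le_divide_eq mult.commute mult.left_commute)
      thus ?thesis using True by simp
    next
      case False
      have "6 / (7 - 4*s) \<le> 2 / (2 - s)" using p assms by (simp add: divide_le_eq le_divide_eq)
      hence "r0 \<le> 2 / (2 - s) * ((3 - s) / (1 - s))" unfolding r0_def using p
        by (intro mult_right_mono) auto
      thus ?thesis using False by simp
    qed
    hence "(r0, (1 - s) / (3 - s) * r0) \<in> K s \<and> J s r0 ((1 - s) / (3 - s) * r0) = (3 - s) / (1 - s)"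
      using part_iii[OF s2 assms(2), of "(1 - s) / (3 - s) * r0" r0] unfolding r0_def by simp
    thus "(SUP p\<in>K s. ?f p) = (3 - s) / (1 - s)"
      by (intro sup_max[where q = "(r0, (1 - s) / (3 - s) * r0)"] gen) auto
  qed
  have c2: "1/4 \<le> s \<and> s \<le> 1/2 \<longrightarrow> (SUP p\<in>K s. ?f p) = (7 - 4*s) / (3 - 4*s)"
  proof
    assume s2: "1/4 \<le> s \<and> s \<le> 1/2"
    have p: "0 < 3 - 4*s" "0 < 7 - 4*s" using s2 by auto
    have e: "(6 / (3 - 4*s)) / (6 / (7 - 4*s)) = (7 - 4*s) / (3 - 4*s)" using p by (simp add: field_simps)
    have "\<And>r rt. (r, rt) \<in> K s \<Longrightarrow> J s r rt \<le> (7 - 4*s) / (3 - 4*s)"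
    proof -
      fix r rt assume k: "(r, rt) \<in> K s"
      hence "6 / (7 - 4*s) \<le> rt" unfolding K_def by auto
      thus "J s r rt \<le> (7 - 4*s) / (3 - 4*s)" using J_small[OF assms(1) _ k, of "6 / (7 - 4*s)"] s2 p e by simp
    qed
    hence b: "\<And>p. p \<in> K s \<Longrightarrow> ?f p \<le> (7 - 4*s) / (3 - 4*s)" by (metis prod.collapse)
    show "(SUP p\<in>K s. ?f p) = (7 - 4*s) / (3 - 4*s)"
      using part_ii s2 by (intro sup_max[where q = "(6 / (3 - 4*s), 6 / (7 - 4*s))"] b) auto
  qed
  have c3: "s \<le> 1/4 \<longrightarrow> (SUP p\<in>K s. ?f p) = 6 / (3 - 4*s)"
  proof
    assume s2: "s \<le> 1/4"
    have "\<And>r rt. (r, rt) \<in> K s \<Longrightarrow> J s r rt \<le> 6 / (3 - 4*s)"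
    proof -
      fix r rt assume k: "(r, rt) \<in> K s"
      hence "1 \<le> rt" unfolding K_def by auto
      thus "J s r rt \<le> 6 / (3 - 4*s)" using J_small[OF assms(1) _ k, of 1] s2 by simp
    qed
    hence b: "\<And>p. p \<in> K s \<Longrightarrow> ?f p \<le> 6 / (3 - 4*s)" by (metis prod.collapse)
    show "(SUP p\<in>K s. ?f p) = 6 / (3 - 4*s)"
      using part_i assms(1) s2 by (intro sup_max[where q = "(6 / (3 - 4*s), 1)"] b) auto
  qed
  show ?thesis using bdd c1 c2 c3 part_i[OF assms(1)] part_ii part_iii assms by auto
qed

end
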